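(* For every $\varepsilon>0$ and every $M>0$ there exists a function $\phi:\mathbb{R}\to\mathbb{R}$ generated by a $\widetilde{\sigma}$-activated network with width $50$ and depth $6$ such that $|\phi(x)-\sigma(x)|<\varepsilon$ for all $x\in[-M,M]$.
   Context: Let $\sigma_1:\mathbb{R}\to\mathbb{R}$ be the continuous triangular-wave function of period $2$: $\sigma_1(x)=|x|$ for $x\in[-1,1]$, $\sigma_1(x+2)=\sigma_1(x)$. Let $\sigma(x)=\sigma_1(x)$ for $x\ge0$ and $\sigma(x)=x/(|x|+1)$ for $x<0$. Define $\widetilde{\sigma}(x)=\frac{x}{-x+1}$ for $x\le 0$ and $\widetilde{\sigma}(x)=\int_0^x\frac{c\,\sigma(t)+1}{(2t+1)^2}\,dt$ for $x>0$, where $c=\big(2\int_0^\infty\frac{\sigma(t)}{(2t+1)^2}dt\big)^{-1}$. For an activation $\eta$ (applied entrywise), a function generated by an $\eta$-activated network with one input, width $N$ and depth $L$ is a function of the form $\mathcal{L}_{\ell}\circ\eta\circ\mathcal{L}_{\ell-1}\circ\cdots\circ\eta\circ\mathcal{L}_0$ with $\ell\le L$ hidden layers, affine maps $\mathcal{L}_i$, $\mathcal{L}_0$ with domain $\mathbb{R}$, $\mathcal{L}_\ell$ with codomain $\mathbb{R}$, and at most $N$ neurons in each hidden layer. *)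

theory Defs
  imports "HOL-Analysis.Analysis"
begin

text \<open>Triangular wave of period 2: equals abs x on [-1,1].\<close>
definition sigma1 :: "real \<Rightarrow> real" where
  "sigma1 x = \<bar>x - 2 * of_int \<lfloor>(x + 1) / 2\<rfloor>\<bar>"

definition sigma :: "real \<Rightarrow> real" where
  "sigma x = (if x \<ge> 0 then sigma1 x else x / (\<bar>x\<bar> + 1))"

definition cconst :: real where
  "cconst = inverse (2 * integral {0..} (\<lambda>t. sigma t / (2 * t + 1)^2))"

definition sigma_tilde :: "real \<Rightarrow> real" where
  "sigma_tilde x = (if x \<le> 0 then x / (- x + 1)
     else integral {0..x} (\<lambda>t. (cconst * sigma t + 1) / (2 * t + 1)^2))"

text \<open>Affine map from R^m to R^n (vectors as nat-indexed functions, entries >= dim are 0).\<close>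
definition affine_map :: "nat \<Rightarrow> nat \<Rightarrow> (nat \<Rightarrow> nat \<Rightarrow> real) \<Rightarrow> (nat \<Rightarrow> real)
    \<Rightarrow> (nat \<Rightarrow> real) \<Rightarrow> (nat \<Rightarrow> real)" where
  "affine_map n m W b v = (\<lambda>i. if i < n then (\<Sum>j<m. W i j * v j) + b i else 0)"

text \<open>Network evaluation: dims = [d0, d1, ..., d_{l+1}], one (W,b) per affine layer;
  activation applied entrywise after every affine map except the last.\<close>
fun eval_net :: "(real \<Rightarrow> real) \<Rightarrow> nat list \<Rightarrow> ((nat \<Rightarrow> nat \<Rightarrow> real) \<times> (nat \<Rightarrow> real)) list
    \<Rightarrow> (nat \<Rightarrow> real) \<Rightarrow> (nat \<Rightarrow> real)" where
  "eval_net act [m, n] [(W, b)] v = affine_map n m W b v"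
| "eval_net act (m # n # k # ds) ((W, b) # ps) v =
     eval_net act (n # k # ds) ps (\<lambda>i. act (affine_map n m W b v i))"
| "eval_net act _ _ v = (\<lambda>i. 0)"

text \<open>f is generated by an act-activated network with one input, one output,
  at most L hidden layers, each with at most N neurons.\<close>
definition net_generated :: "(real \<Rightarrow> real) \<Rightarrow> nat \<Rightarrow> nat \<Rightarrow> (real \<Rightarrow> real) \<Rightarrow> bool" where
  "net_generated act N L f \<longleftrightarrow>
     (\<exists>ds ps. length ds \<ge> 2 \<and> length ds \<le> L + 2 \<and> hd ds = 1 \<and> last ds = 1 \<and>
        (\<forall>k. 0 < k \<and> k < length ds - 1 \<longrightarrow> ds ! k \<le> N) \<and>
        length ps = length ds - 1 \<and>
        f = (\<lambda>x. eval_net act ds ps (\<lambda>j. x) 0))"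

end

theory Submission
  imports Defs
begin

lemma sigma1_shift: "sigma1 (x + 2 * of_int k) = sigma1 x"
proof -
  have "(x + 2 * of_int k + 1) / 2 = (x + 1) / 2 + of_int k" by (simp add: field_simps)
  then have "\<lfloor>(x + 2 * of_int k + 1) / 2\<rfloor> = \<lfloor>(x + 1) / 2\<rfloor> + k"
    by (simp only: floor_add_int)
  then show ?thesis unfolding sigma1_def by simp
qed

lemma sigma1_base: fixes x :: real shows "-1 \<le> x - 2 * of_int \<lfloor>(x + 1) / 2\<rfloor> \<and> x - 2 * of_int \<lfloor>(x + 1) / 2\<rfloor> < 1"
proof -
  have "of_int \<lfloor>(x + 1) / 2\<rfloor> \<le> (x+1)/2" by (rule of_int_floor_le)
  moreover have "(x+1)/2 < of_int \<lfloor>(x + 1) / 2\<rfloor> + 1" by (rule real_of_int_floor_add_one_gt)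
  ultimately show ?thesis by (simp add: field_simps)
qed

lemma sigma1_le: "sigma1 x \<le> \<bar>x - 2 * of_int k\<bar>"
proof -
  define n where "n = \<lfloor>(x + 1) / 2\<rfloor>"
  have b: "-1 \<le> x - 2 * of_int n" "x - 2 * of_int n < 1" using sigma1_base[of x] n_def by auto
  have s: "sigma1 x = \<bar>x - 2 * of_int n\<bar>" unfolding sigma1_def n_def by simp
  show ?thesis
  proof (cases "k = n")
    case True then show ?thesis using s by simp
  next
    case False
    then have "k \<ge> n + 1 \<or> k \<le> n - 1" by linarith
    then have "real_of_int k \<ge> of_int n + 1 \<or> real_of_int k \<le> of_int n - 1"
      by (metis of_int_1 of_int_add of_int_diff of_int_le_iff)
    then show ?thesis using s b by auto
  qed
qed

lemma sigma1_nonneg: "0 \<le> sigma1 x" unfolding sigma1_def by simp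

lemma sigma1_le1: "sigma1 x \<le> 1"
  using sigma1_base[of x] unfolding sigma1_def by auto

lemma sigma1_lip: "\<bar>sigma1 x - sigma1 y\<bar> \<le> \<bar>x - y\<bar>"
proof -
  have "sigma1 x \<le> sigma1 y + \<bar>x - y\<bar>"
    using sigma1_le[of x "\<lfloor>(y + 1) / 2\<rfloor>"] unfolding sigma1_def by linarith
  moreover have "sigma1 y \<le> sigma1 x + \<bar>x - y\<bar>"
    using sigma1_le[of y "\<lfloor>(x + 1) / 2\<rfloor>"] unfolding sigma1_def by linarith
  ultimately show ?thesis by linarith
qed

lemma sigma1_abs: assumes "\<bar>x\<bar> \<le> 1" shows "sigma1 x = \<bar>x\<bar>"
proof -
  define n where "n = \<lfloor>(x + 1) / 2\<rfloor>"
  have s: "sigma1 x = \<bar>x - 2 * of_int n\<bar>" unfolding sigma1_def n_def by simp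
  have "sigma1 x \<le> \<bar>x\<bar>" using sigma1_le[of x 0] by simp
  moreover have "sigma1 x \<ge> \<bar>x\<bar>"
  proof (cases "n = 0")
    case True then show ?thesis using s by simp
  next
    case False
    then have "real_of_int n \<ge> 1 \<or> real_of_int n \<le> -1" by linarith
    then show ?thesis using s assms by auto
  qed
  ultimately show ?thesis by simp
qed

lemma sigma1_cont: "continuous_on S sigma1"
  unfolding continuous_on_iff
proof (intro ballI allI impI)
  fix x e assume "x \<in> S" "(0::real) < e"
  then show "\<exists>d>0. \<forall>x'\<in>S. dist x' x < d \<longrightarrow> dist (sigma1 x') (sigma1 x) < e"
    using sigma1_lip by (auto simp: dist_real_def intro!: exI[of _ e] order.strict_trans1[OF sigma1_lip])
qed

lemma sigma_nonneg: "x \<ge> 0 \<Longrightarrow> sigma x = sigma1 x" unfolding sigma_def by simp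

lemma sigma_nonpos: assumes "x \<le> 0" shows "sigma x = x / (1 - x)"
proof (cases "x = 0")
  case True then show ?thesis using sigma1_abs[of 0] by (simp add: sigma_def)
next
  case False then show ?thesis using assms by (simp add: sigma_def)
qed

lemma st_nonpos: "x \<le> 0 \<Longrightarrow> sigma_tilde x = x / (1 - x)"
  unfolding sigma_tilde_def by simp

definition gfun :: "real \<Rightarrow> real" where "gfun t = (cconst * sigma t + 1) / (2*t+1)^2"
definition f0 :: "real \<Rightarrow> real" where "f0 t = sigma t / (2*t+1)^2"

lemma sigma_cont: "continuous_on {0..} sigma"
  by (rule continuous_on_eq[OF sigma1_cont]) (auto simp: sigma_nonneg)

lemma gfun_cont: "continuous_on {0..} gfun"
  unfolding gfun_def
  by (intro continuous_intros sigma_cont) (auto simp: add_pos_pos)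

lemma f0_cont: "continuous_on {0..} f0"
  unfolding f0_def
  by (intro continuous_intros sigma_cont) (auto simp: add_pos_pos)

lemma f0_nonneg: "t \<ge> 0 \<Longrightarrow> 0 \<le> f0 t"
  unfolding f0_def by (simp add: sigma_nonneg sigma1_nonneg)

lemma f0_int01: "f0 integrable_on {0..1}"
  by (rule integrable_continuous_interval, rule continuous_on_subset[OF f0_cont]) auto

lemma f0_int1: "f0 integrable_on {1..}"
proof (rule measurable_bounded_by_integrable_imp_integrable[where g="\<lambda>x. 1 / x ^ 2"])
  show "f0 \<in> borel_measurable (lebesgue_on {1..})"
    by (rule continuous_imp_measurable_on_sets_lebesgue, rule continuous_on_subset[OF f0_cont]) auto
  show "(\<lambda>x::real. 1 / x ^ 2) integrable_on {1..}"
    using has_integral_inverse_power_to_inf[of 2 1] by (auto simp: integrable_on_def)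
  show "{1::real..} \<in> sets lebesgue" by simp
  fix x :: real assume x: "x \<in> {1..}"
  then have "sigma x \<le> 1" "0 \<le> sigma x" using sigma1_le1 sigma1_nonneg sigma_nonneg by auto
  moreover have "x^2 \<le> (2*x+1)^2" using x by (intro power_mono) auto
  moreover have "0 < x^2" using x by auto
  moreover have "sigma x * x^2 \<le> 1 * x^2" using mult_right_mono[OF \<open>sigma x \<le> 1\<close>, of "x^2"] by simp
  ultimately have "sigma x * x^2 \<le> (2*x+1)^2" by linarith
  then show "norm (f0 x) \<le> 1 / x^2" unfolding f0_def
    using x \<open>0 \<le> sigma x\<close> by (auto simp: divide_simps)
qed

lemma f0_int: "f0 integrable_on {0..}"
proof (rule integrable_Un'[OF f0_int01 f0_int1])
  show "negligible ({0..1} \<inter> {1::real..})" by (simp add: negligible_sing)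
qed auto

lemma f0_pos: "integral {0..} f0 > 0"
proof -
  have i: "f0 integrable_on {1/2..1}"
    by (rule integrable_continuous_interval, rule continuous_on_subset[OF f0_cont]) auto
  have "integral {1/2::real..1} (\<lambda>_. 1/18::real) \<le> integral {1/2..1} f0"
  proof (rule integral_le)
    fix x :: real assume x: "x \<in> {1/2..1}"
    then have "sigma x = x" using sigma_nonneg sigma1_abs by auto
    moreover have "(2*x+1)^2 \<le> 3^2" using x by (intro power_mono) auto
    ultimately show "1/18 \<le> f0 x" using x unfolding f0_def by (auto simp: divide_simps)
  qed (use i in auto)
  also have "\<dots> \<le> integral {0..} f0"
    by (rule integral_subset_le[OF _ i f0_int]) (auto intro: f0_nonneg)
  finally show ?thesis by simp
qed

lemma cconst_pos: "cconst > 0"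
  unfolding cconst_def using f0_pos unfolding f0_def by simp

lemma st_int: "x \<ge> 0 \<Longrightarrow> sigma_tilde x = integral {0..x} gfun"
  unfolding sigma_tilde_def gfun_def by auto

lemma gfun_int: "0 \<le> a \<Longrightarrow> gfun integrable_on {a..b}"
  by (rule integrable_continuous_interval, rule continuous_on_subset[OF gfun_cont]) auto

lemma st_diff: assumes "0 \<le> a" "a \<le> b"
  shows "sigma_tilde b - sigma_tilde a = integral {a..b} gfun"
  using Henstock_Kurzweil_Integration.integral_combine[OF _ _ gfun_int[of 0 b], of a] assms st_int[of a] st_int[of b] by auto

lemma ratio_bound: fixes p q :: real assumes "0 < p" "p \<le> q"
  shows "1 - p^2/q^2 \<le> 2*(q-p)/q" "0 \<le> 1 - p^2/q^2"
proof -
  have "(q-p)*(q+p) \<le> (q-p)*(2*q)" using assms by (intro mult_left_mono) auto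
  then have "q^2 - p^2 \<le> 2*(q-p)*q" by (simp add: algebra_simps power2_eq_square)
  then have "(q^2 - p^2)/q^2 \<le> (2*(q-p)*q)/q^2" by (rule divide_right_mono) simp
  moreover have "(q^2 - p^2)/q^2 = 1 - p^2/q^2" using assms by (simp add: field_simps)
  moreover have "(2*(q-p)*q)/q^2 = 2*(q-p)/q" using assms by (simp add: field_simps power2_eq_square)
  ultimately show "1 - p^2/q^2 \<le> 2*(q-p)/q" by simp
  have "p^2 \<le> q^2" using assms by (intro power_mono) auto
  then show "0 \<le> 1 - p^2/q^2" using assms by (simp add: field_simps)
qed

definition Kc :: real where "Kc = 5 * cconst + 4"

lemma gfun_lip: assumes "0 \<le> a" "a \<le> t"
  shows "\<bar>gfun t - gfun a\<bar> \<le> Kc * (t - a) / (2*a+1)^2"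
proof -
  define wa where "wa = 1/(2*a+1)^2"
  define wt where "wt = 1/(2*t+1)^2"
  have c: "cconst > 0" by (rule cconst_pos)
  have wa: "wa > 0" unfolding wa_def using assms by simp
  have wt: "wt > 0" unfolding wt_def using assms by simp
  have "1 - (2*a+1)^2/(2*t+1)^2 \<le> 2*((2*t+1)-(2*a+1))/(2*t+1)"
    using ratio_bound(1)[of "2*a+1" "2*t+1"] assms by simp
  also have "\<dots> \<le> 2*((2*t+1)-(2*a+1))"
  proof -
    have "(4*t-4*a) * 1 \<le> (4*t-4*a) * (2*t+1)" using assms by (intro mult_left_mono) auto
    then show ?thesis using assms by (simp add: divide_simps)
  qed
  finally have r: "1 - (2*a+1)^2/(2*t+1)^2 \<le> 4*(t-a)" by simp
  have r0: "0 \<le> 1 - (2*a+1)^2/(2*t+1)^2" using ratio_bound(2)[of "2*a+1" "2*t+1"] assms by simp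
  have "wa - wt = wa * (1 - (2*a+1)^2/(2*t+1)^2)" unfolding wa_def wt_def using assms
    by (simp add: field_simps)
  then have w1: "0 \<le> wa - wt" "wa - wt \<le> 4*(t-a)*wa" using r r0 wa
    by (auto simp: mult_left_mono[OF r, of wa] mult.commute)
  have sa: "sigma a = sigma1 a" "sigma t = sigma1 t" using assms by (auto simp: sigma_nonneg)
  have s1: "\<bar>sigma t - sigma a\<bar> \<le> t - a" using sigma1_lip[of t a] sa assms by simp
  have s2: "0 \<le> sigma a" "sigma a \<le> 1" using sa sigma1_nonneg sigma1_le1 by auto
  have eq: "gfun t - gfun a = cconst * (sigma t - sigma a) * wt + (cconst * sigma a + 1) * (wt - wa)"
    unfolding gfun_def wa_def wt_def using assms by (simp add: field_simps add_divide_distrib[symmetric] diff_divide_distrib[symmetric])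
  have "\<bar>cconst * (sigma t - sigma a) * wt\<bar> \<le> cconst * (t - a) * wa"
  proof -
    have "\<bar>cconst * (sigma t - sigma a) * wt\<bar> = cconst * \<bar>sigma t - sigma a\<bar> * wt"
      using c wt by (simp add: abs_mult)
    also have "\<dots> \<le> cconst * (t - a) * wa"
      using c s1 w1 wt by (intro mult_mono) auto
    finally show ?thesis .
  qed
  moreover have "\<bar>(cconst * sigma a + 1) * (wt - wa)\<bar> \<le> (cconst + 1) * (4*(t-a)*wa)"
  proof -
    have "\<bar>(cconst * sigma a + 1) * (wt - wa)\<bar> = (cconst * sigma a + 1) * (wa - wt)"
      using c s2 w1 by (simp add: abs_mult)
    also have "\<dots> \<le> (cconst + 1) * (4*(t-a)*wa)"
      using c s2 w1 by (intro mult_mono) auto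
    finally show ?thesis .
  qed
  ultimately have "\<bar>gfun t - gfun a\<bar> \<le> cconst * (t - a) * wa + (cconst + 1) * (4*(t-a)*wa)"
    unfolding eq by linarith
  also have "\<dots> = Kc * (t - a) / (2*a+1)^2" unfolding Kc_def wa_def using assms
    by (simp add: field_simps add_divide_distrib[symmetric])
  finally show ?thesis .
qed

lemma step_bound: assumes "0 \<le> a" "0 < h"
  shows "\<bar>sigma_tilde (a+h) - sigma_tilde a - h * gfun a\<bar> \<le> Kc * h^2 / (2*a+1)^2"
proof -
  have hi: "(gfun has_integral integral {a..a+h} gfun) {a..a+h}"
    using gfun_int[of a "a+h"] assms by (simp add: integrable_integral)
  have hc: "((\<lambda>t. gfun a) has_integral h * gfun a) {a..a+h}"
    using has_integral_const_real[of "gfun a" a "a+h"] assms by simp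
  have "((\<lambda>t. gfun t - gfun a) has_integral (integral {a..a+h} gfun - h * gfun a)) {a..a+h}"
    by (rule has_integral_diff[OF hi hc])
  then have ieq: "integral {a..a+h} (\<lambda>t. gfun t - gfun a) = integral {a..a+h} gfun - h * gfun a"
    by (rule integral_unique)
  have "norm (integral {a..a+h} (\<lambda>t. gfun t - gfun a)) \<le> (Kc * h / (2*a+1)^2) * ((a+h) - a)"
  proof (rule integral_bound)
    show "a \<le> a + h" using assms by simp
    show "continuous_on {a..a + h} (\<lambda>t. gfun t - gfun a)"
      by (intro continuous_intros continuous_on_subset[OF gfun_cont]) (use assms in auto)
    fix t assume t: "t \<in> {a..a+h}"
    have "\<bar>gfun t - gfun a\<bar> \<le> Kc * (t - a) / (2*a+1)^2" using gfun_lip[of a t] t assms by auto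
    also have "\<dots> \<le> Kc * h / (2*a+1)^2" using t assms cconst_pos unfolding Kc_def
      by (intro divide_right_mono mult_left_mono) auto
    finally show "norm (gfun t - gfun a) \<le> Kc * h / (2*a+1)^2" by simp
  qed
  then show ?thesis using ieq st_diff[of a "a+h"] assms by (simp add: power2_eq_square)
qed

definition Pf :: "real \<Rightarrow> real \<Rightarrow> real \<Rightarrow> real" where
  "Pf T h y = ((2*T+1)^2 * (sigma_tilde (T+y+h) - sigma_tilde (T+y)) / h - 1) / cconst"

lemma CL: assumes "e > 0" "B \<ge> 0"
  shows "\<exists>T h. T \<ge> 0 \<and> h > 0 \<and> (\<forall>y\<in>{0..B}. \<bar>Pf T h y - sigma1 y\<bar> \<le> e)"
proof -
  define c where "c = cconst"
  have c: "c > 0" unfolding c_def by (rule cconst_pos)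
  have K: "Kc > 0" unfolding Kc_def using cconst_pos by simp
  define h where "h = c*e/(2*Kc)"
  have h: "h > 0" unfolding h_def using c K assms by simp
  obtain N :: nat where N: "8*B*(c+1)/(c*e) < real N" using reals_Archimedean2 by blast
  have N0: "8*B*(c+1)/(c*e) \<ge> 0" using assms c by simp
  define T where "T = 2 * real N"
  have T: "T \<ge> 0" unfolding T_def by simp
  show ?thesis
  proof (intro exI conjI ballI)
    show "T \<ge> 0" "h > 0" by (fact T, fact h)
    fix y assume y: "y \<in> {0..B}"
    define a where "a = T + y"
    define p where "p = 2*T+1"
    define q where "q = 2*a+1"
    have a: "a \<ge> 0" unfolding a_def using T y by simp
    have pq: "0 < p" "p \<le> q" unfolding p_def q_def a_def using T y by auto
    have qN: "q > real N" unfolding q_def a_def T_def using y by auto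
    have sa: "sigma a = sigma1 y"
      using sigma_nonneg[OF a] sigma1_shift[of y "int N"] unfolding a_def T_def by (simp add: add.commute)
    define Dq where "Dq = (sigma_tilde (a+h) - sigma_tilde a)/h"
    have "\<bar>sigma_tilde (a+h) - sigma_tilde a - h * gfun a\<bar> \<le> Kc * h^2 / q^2"
      using step_bound[OF a h] unfolding q_def .
    then have "\<bar>Dq - gfun a\<bar> \<le> Kc * h / q^2"
    proof -
      assume A: "\<bar>sigma_tilde (a+h) - sigma_tilde a - h * gfun a\<bar> \<le> Kc * h^2 / q^2"
      have "Dq - gfun a = (sigma_tilde (a+h) - sigma_tilde a - h * gfun a) / h"
        unfolding Dq_def using h by (simp add: field_simps)
      then have "\<bar>Dq - gfun a\<bar> = \<bar>sigma_tilde (a+h) - sigma_tilde a - h * gfun a\<bar> / h"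
        using h by simp
      also have "\<dots> \<le> (Kc * h^2 / q^2) / h" using A h by (intro divide_right_mono) auto
      also have "\<dots> = Kc * h / q^2" using h by (simp add: power2_eq_square)
      finally show ?thesis .
    qed
    then have "p^2 * \<bar>Dq - gfun a\<bar> \<le> p^2 * (Kc * h / q^2)" by (intro mult_left_mono) auto
    also have "\<dots> = Kc * h * (p^2/q^2)" by simp
    also have "\<dots> \<le> Kc * h * 1"
    proof -
      have "p^2 \<le> q^2" using pq by (intro power_mono) auto
      then have "p^2/q^2 \<le> 1" using pq by simp
      then show ?thesis using K h by (intro mult_left_mono) auto
    qed
    also have "\<dots> = c*e/2" unfolding h_def using K by simp
    finally have E1: "\<bar>p^2 * Dq - p^2 * gfun a\<bar> \<le> c*e/2" by (simp add: abs_mult right_diff_distrib[symmetric])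
    have ga: "p^2 * gfun a = (c * sigma1 y + 1) * (p^2/q^2)"
      unfolding gfun_def c_def q_def sa by simp
    have s2: "0 \<le> sigma1 y" "sigma1 y \<le> 1" using sigma1_nonneg sigma1_le1 by auto
    have "p^2 * gfun a - (c * sigma1 y + 1) = - ((c * sigma1 y + 1) * (1 - p^2/q^2))"
      unfolding ga by (simp add: algebra_simps)
    moreover have "0 \<le> (c * sigma1 y + 1) * (1 - p^2/q^2)"
      using ratio_bound(2)[OF pq] c s2 by (intro mult_nonneg_nonneg) auto
    ultimately have "\<bar>p^2 * gfun a - (c * sigma1 y + 1)\<bar> = (c * sigma1 y + 1) * (1 - p^2/q^2)"
      by simp
    also have "\<dots> \<le> (c + 1) * (2*(q-p)/q)"
      using ratio_bound[OF pq] c s2 by (intro mult_mono) auto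
    also have "\<dots> = (c+1) * (4*y) / q" unfolding p_def q_def a_def by simp
    also have "\<dots> \<le> c*e/2"
    proof -
      have "(c+1)*(4*y) \<le> (c+1)*(4*B)" using y c by (intro mult_left_mono) auto
      also have "\<dots> = (c*e/2) * (8*B*(c+1)/(c*e))" using c assms by (simp add: field_simps)
      also have "\<dots> \<le> (c*e/2) * q" using N qN N0 c assms by (intro mult_left_mono) auto
      finally show ?thesis using pq by (simp add: divide_simps mult.commute)
    qed
    finally have E2: "\<bar>p^2 * gfun a - (c * sigma1 y + 1)\<bar> \<le> c*e/2" .
    have "\<bar>(p^2 * Dq - 1) - c * sigma1 y\<bar> \<le> c*e" using E1 E2 by linarith
    moreover have "Pf T h y = (p^2 * Dq - 1) / c"
      unfolding Pf_def Dq_def p_def c_def a_def by (simp add: add.assoc)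
    ultimately have "(p^2 * Dq - 1) - c * sigma1 y = c * (Pf T h y - sigma1 y)"
      using c by (simp add: field_simps)
    then have "c * \<bar>Pf T h y - sigma1 y\<bar> \<le> c * e"
      using \<open>\<bar>(p^2 * Dq - 1) - c * sigma1 y\<bar> \<le> c*e\<close> c by (simp add: abs_mult)
    then show "\<bar>Pf T h y - sigma1 y\<bar> \<le> e" using c by simp
  qed
qed

lemma Pf_lin: assumes "h > 0"
  shows "Pf T h y = ((2*T+1)^2/(h*cconst)) * (sigma_tilde (T+y+h) - sigma_tilde (T+y)) - 1/cconst"
  unfolding Pf_def using assms cconst_pos by (simp add: field_simps)

lemma mob_lip: fixes a b :: real assumes "a \<le> 0" "b \<le> 0"
  shows "\<bar>a/(1-a) - b/(1-b)\<bar> \<le> \<bar>a - b\<bar>"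
proof -
  have "a/(1-a) - b/(1-b) = (a-b)/((1-a)*(1-b))" using assms by (simp add: field_simps)
  moreover have "(1-a)*(1-b) \<ge> 1*1" using assms by (intro mult_mono) auto
  ultimately have "\<bar>a/(1-a) - b/(1-b)\<bar> = \<bar>a-b\<bar>/((1-a)*(1-b))" by simp
  also have "\<dots> \<le> \<bar>a-b\<bar>/1" using \<open>(1-a)*(1-b) \<ge> 1*1\<close> by (intro divide_left_mono) auto
  finally show ?thesis by simp
qed

lemma eval_143: "eval_net act [1,4,3,1] [(W1,b1),(W2,b2),(W3,b3)] v 0 =
   W3 0 0 * act (W2 0 0 * act (W1 0 0 * v 0 + b1 0) + W2 0 1 * act (W1 1 0 * v 0 + b1 1)
                 + W2 0 2 * act (W1 2 0 * v 0 + b1 2) + W2 0 3 * act (W1 3 0 * v 0 + b1 3) + b2 0)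
 + W3 0 1 * act (W2 1 0 * act (W1 0 0 * v 0 + b1 0) + W2 1 1 * act (W1 1 0 * v 0 + b1 1)
                 + W2 1 2 * act (W1 2 0 * v 0 + b1 2) + W2 1 3 * act (W1 3 0 * v 0 + b1 3) + b2 1)
 + W3 0 2 * act (W2 2 0 * act (W1 0 0 * v 0 + b1 0) + W2 2 1 * act (W1 1 0 * v 0 + b1 1)
                 + W2 2 2 * act (W1 2 0 * v 0 + b1 2) + W2 2 3 * act (W1 3 0 * v 0 + b1 3) + b2 2)
 + b3 0"
  by (simp add: affine_map_def numeral_eq_Suc lessThan_Suc add_ac)

theorem lemma12:
  fixes \<epsilon> M :: real
  assumes "\<epsilon> > 0" and "M > 0"
  shows "\<exists>\<phi>. net_generated sigma_tilde 50 6 \<phi> \<and>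
           (\<forall>x\<in>{-M..M}. \<bar>\<phi> x - sigma x\<bar> < \<epsilon>)"
proof -
  define e where "e = min (\<epsilon>/(2+16*M)) (1/(5*M))"
  have e0: "e > 0" unfolding e_def using assms by simp
  have e1: "5*M*e \<le> 1" unfolding e_def using assms by (simp add: min_def field_simps)
  have e2': "e \<le> \<epsilon>/(2+16*M)" unfolding e_def by simp
  have e2: "e*(2+16*M) \<le> \<epsilon>" using e2' assms by (simp add: field_simps)
  obtain T h where T: "T \<ge> 0" and h: "h > 0" and CLb: "\<And>y. y \<in> {0..M+3} \<Longrightarrow> \<bar>Pf T h y - sigma1 y\<bar> \<le> e"
    using CL[OF e0, of "M+3"] assms by auto
  define c where "c = cconst"
  have c: "c > 0" unfolding c_def by (rule cconst_pos)
  define al where "al = (2*T+1)^2/(h*c)"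
  have PL: "\<And>y. Pf T h y = al * (sigma_tilde (T+y+h) - sigma_tilde (T+y)) - 1/c"
    unfolding al_def c_def using Pf_lin[OF h] by simp
  define eta where "eta = 5*M*e/2"
  define Xt where "Xt = (\<lambda>x. 4*M*(Pf T h (1/2 + x/(4*M)) - 1/2))"
  define At where "At = (\<lambda>x. M * Pf T h (2 + x/M))"
  define zz where "zz = (\<lambda>x. (Xt x + At x)/2 + 2)"
  define mm where "mm = (\<lambda>x. (Xt x - At x)/2 - eta)"
  define \<phi> where "\<phi> = (\<lambda>x. Pf T h (zz x) + sigma_tilde (mm x))"
  define W1 where "W1 = (\<lambda>(i::nat) (j::nat). [1/(4*M), 1/(4*M), 1/M, 1/M] ! i)"
  define b1 where "b1 = (\<lambda>i::nat. [T+h+1/2, T+1/2, T+h+2, T+2] ! i)"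
  define W2 where "W2 = (\<lambda>(i::nat) (j::nat). [[2*M*al, -2*M*al, M*al/2, -M*al/2], [2*M*al, -2*M*al, M*al/2, -M*al/2],
                         [2*M*al, -2*M*al, -M*al/2, M*al/2]] ! i ! j)"
  define X0 where "X0 = -4*M/c - 2*M"
  define A0 where "A0 = -M/c"
  define b2 where "b2 = (\<lambda>i::nat. [T + h + (X0 + A0)/2 + 2, T + (X0 + A0)/2 + 2, (X0 - A0)/2 - eta] ! i)"
  define W3 where "W3 = (\<lambda>(i::nat) (j::nat). [al, -al, 1] ! j)"
  define b3 where "b3 = (\<lambda>i::nat. -1/c)"
  have net: "\<phi> x = eval_net sigma_tilde [1,4,3,1] [(W1,b1),(W2,b2),(W3,b3)] (\<lambda>j. x) 0" for x
  proof -
    define y1 where "y1 = 1/2 + x/(4*M)"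
    define y2 where "y2 = 2 + x/M"
    define A1 where "A1 = sigma_tilde (T+y1+h)"
    define A2 where "A2 = sigma_tilde (T+y1)"
    define A3 where "A3 = sigma_tilde (T+y2+h)"
    define A4 where "A4 = sigma_tilde (T+y2)"
    have q1: "W1 0 0 * x + b1 0 = T+y1+h" "W1 1 0 * x + b1 1 = T+y1"
         "W1 2 0 * x + b1 2 = T+y2+h" "W1 3 0 * x + b1 3 = T+y2"
      unfolding W1_def b1_def y1_def y2_def by (simp_all add: field_simps)
    have XA: "Xt x = 4*M*(al*(A1-A2) - 1/c - 1/2)" "At x = M*(al*(A3-A4) - 1/c)"
      unfolding Xt_def At_def A1_def A2_def A3_def A4_def y1_def y2_def PL by simp_all
    have q2: "W2 0 0 * A1 + W2 0 1 * A2 + W2 0 2 * A3 + W2 0 3 * A4 + b2 0 = T + zz x + h"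
             "W2 1 0 * A1 + W2 1 1 * A2 + W2 1 2 * A3 + W2 1 3 * A4 + b2 1 = T + zz x"
             "W2 2 0 * A1 + W2 2 1 * A2 + W2 2 2 * A3 + W2 2 3 * A4 + b2 2 = mm x"
      unfolding W2_def b2_def zz_def mm_def XA X0_def A0_def using c by (simp_all add: field_simps)
    have "eval_net sigma_tilde [1,4,3,1] [(W1,b1),(W2,b2),(W3,b3)] (\<lambda>j. x) 0 =
       W3 0 0 * sigma_tilde (T + zz x + h) + W3 0 1 * sigma_tilde (T + zz x) + W3 0 2 * sigma_tilde (mm x) + b3 0"
      unfolding eval_143 q1 A1_def[symmetric] A2_def[symmetric] A3_def[symmetric] A4_def[symmetric] q2 ..
    also have "\<dots> = \<phi> x" unfolding \<phi>_def PL W3_def b3_def by (simp add: algebra_simps)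
    finally show ?thesis by simp
  qed
  have ng: "net_generated sigma_tilde 50 6 \<phi>"
    unfolding net_generated_def
  proof (intro exI conjI)
    show "\<phi> = (\<lambda>x. eval_net sigma_tilde [1,4,3,1] [(W1,b1),(W2,b2),(W3,b3)] (\<lambda>j. x) 0)"
      using net by auto
    show "\<forall>k. 0 < k \<and> k < length [1::nat,4,3,1] - 1 \<longrightarrow> [1::nat,4,3,1] ! k \<le> 50"
    proof (intro allI impI)
      fix k :: nat assume "0 < k \<and> k < length [1::nat,4,3,1] - 1"
      then have "k = 1 \<or> k = 2" by auto
      then show "[1::nat,4,3,1] ! k \<le> 50" by auto
    qed
  qed auto
  have err: "\<bar>\<phi> x - sigma x\<bar> < \<epsilon>" if x: "x \<in> {-M..M}" for x
  proof -
    define y1 where "y1 = 1/2 + x/(4*M)"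
    define y2 where "y2 = 2 + x/M"
    have xm: "\<bar>x/M\<bar> \<le> 1" using x assms by (auto simp: divide_simps)
    have xm2: "-1 \<le> x/M" "x/M \<le> 1" using x assms by (auto simp: divide_simps)
    have x4: "x/(4*M) \<le> 1/4" "-1/4 \<le> x/(4*M)" using x assms by (auto simp: divide_simps)
    have y1b: "0 \<le> y1" "y1 \<le> 1" unfolding y1_def using x4 by linarith+
    have y1r: "y1 \<in> {0..M+3}" "\<bar>y1\<bar> \<le> 1" using y1b assms by auto
    have y2b: "0 \<le> y2" "y2 \<le> M+3" unfolding y2_def using xm2 assms by linarith+
    have y2r: "y2 \<in> {0..M+3}" using y2b by auto
    have s1: "sigma1 y1 = y1" using sigma1_abs[OF y1r(2)] y1r(1) by simp
    have s2: "sigma1 y2 = \<bar>x\<bar>/M"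
      using sigma1_shift[of "x/M" 1] sigma1_abs[OF xm] assms unfolding y2_def by (simp add: add.commute abs_div)
    have EX: "\<bar>Xt x - x\<bar> \<le> 4*M*e"
    proof -
      have "Xt x - x = 4*M*(Pf T h y1 - y1)" unfolding Xt_def y1_def using assms by (simp add: field_simps)
      then show ?thesis using CLb[OF y1r(1)] assms s1 by (simp add: abs_mult)
    qed
    have EA: "\<bar>At x - \<bar>x\<bar>\<bar> \<le> M*e"
    proof -
      have "At x - \<bar>x\<bar> = M*(Pf T h y2 - \<bar>x\<bar>/M)" unfolding At_def y2_def using assms by (simp add: field_simps)
      then show ?thesis using CLb[OF y2r] assms s2 by (simp add: abs_mult)
    qed
    define r where "r = (x + \<bar>x\<bar>)/2"
    define m where "m = (x - \<bar>x\<bar>)/2"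
    have r: "0 \<le> r" "r \<le> M" unfolding r_def using x by auto
    have m: "m \<le> 0" unfolding m_def by simp
    have zeq: "zz x - (r+2) = ((Xt x - x) + (At x - \<bar>x\<bar>))/2" unfolding zz_def r_def by (simp add: field_simps)
    have "\<bar>((Xt x - x) + (At x - \<bar>x\<bar>))/2\<bar> \<le> 5*M*e/2"
      using EX EA by (auto simp: abs_le_iff)
    then have zr: "\<bar>zz x - (r+2)\<bar> \<le> 5*M*e/2" by (simp only: zeq)
    have zB0: "0 \<le> zz x" "zz x \<le> M+3" using zr r e1 unfolding abs_le_iff by linarith+
    have zB: "zz x \<in> {0..M+3}" using zB0 by auto
    have E1: "\<bar>Pf T h (zz x) - sigma1 (zz x)\<bar> \<le> e" using CLb[OF zB] .
    have E2: "\<bar>sigma1 (zz x) - sigma1 r\<bar> \<le> 5*M*e/2"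
      using sigma1_lip[of "zz x" "r+2"] sigma1_shift[of r 1] zr by simp
    define d where "d = M*e"
    have EX': "\<bar>Xt x - x\<bar> \<le> 4*d" and EA': "\<bar>At x - \<bar>x\<bar>\<bar> \<le> d" using EX EA by (simp_all add: d_def mult.assoc)
    define Q where "Q = ((Xt x - x) - (At x - \<bar>x\<bar>))/2 - 5*d/2"
    have meq: "mm x - m = Q" unfolding Q_def mm_def m_def eta_def d_def by (simp add: field_simps)
    note F = abs_le_D1[OF EX'] abs_le_D2[OF EX'] abs_le_D1[OF EA'] abs_le_D2[OF EA']
    have Q1: "Q \<le> 0" unfolding Q_def using F by (simp add: field_simps)
    have Q2: "\<bar>Q\<bar> \<le> 5*d" unfolding Q_def using F by (intro abs_leI; simp add: field_simps)
    have mm1: "mm x \<le> 0" "\<bar>mm x - m\<bar> \<le> 5*M*e"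
      using meq m Q1 Q2 unfolding d_def by (linarith, simp add: mult.assoc)
    have E3: "\<bar>sigma_tilde (mm x) - sigma_tilde m\<bar> \<le> 5*M*e"
      using mob_lip[OF mm1(1) m] mm1(2) st_nonpos[OF mm1(1)] st_nonpos[OF m] by simp
    have sx: "sigma x = sigma1 r + sigma_tilde m"
    proof (cases "x \<ge> 0")
      case True
      then show ?thesis unfolding r_def m_def using sigma_nonneg[OF True] st_nonpos[of 0] by simp
    next
      case False
      then show ?thesis unfolding r_def m_def using sigma_nonpos[of x] st_nonpos[of x] sigma1_abs[of 0] by simp
    qed
    have "\<bar>\<phi> x - sigma x\<bar> \<le> e + 5*M*e/2 + 5*M*e"
      unfolding \<phi>_def sx using E1 E2 E3 by linarith
    also have "\<dots> < \<epsilon>"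
    proof -
      have d0: "0 < d" unfolding d_def using e0 assms by simp
      have "e*(2+16*M) = 2*e + 16*d" "e + 5*M*e/2 + 5*M*e = e + 15*d/2" unfolding d_def by (simp_all add: algebra_simps)
      then show ?thesis using e2 e0 d0 by linarith
    qed
    finally show ?thesis .
  qed
  show ?thesis using ng err by blast
qed

end
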